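(* Let $\xi \in \Phi_{\rm BYG}$. Then $m_{\rm crit} > 2 \delta_R$.
   Context: Parameters $\xi = (\tau_L, \delta_L, \tau_R, \delta_R)$ of the map $f_\xi(x,y) = (\tau_L x + y + 1, -\delta_L x)$ for $x \le 0$ and $(\tau_R x + y + 1, -\delta_R x)$ for $x \ge 0$. Let $\Phi = \{ \xi \mid \tau_L > \delta_L + 1, \delta_L > 0, \tau_R < -(\delta_R + 1), \delta_R > 0 \}$. Let $0 < \lambda_L^s < 1 < \lambda_L^u$ be the eigenvalues of $A_L = \begin{bmatrix} \tau_L & 1 \\ -\delta_L & 0 \end{bmatrix}$. Define $\phi(\xi) = \delta_R - \left( \tau_R + \delta_L + \delta_R - (1 + \tau_R) \lambda_L^u \right) \lambda_L^u$ and $\Phi_{\rm BYG} = \{ \xi \in \Phi \mid \phi(\xi) > 0 \}$. Define $m_{\rm crit} = \lambda_L^s + \frac{2 \tau_L}{(\lambda_L^u)^2 - 1}$. *)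

theory Defs
  imports Complex_Main
begin

definition Phi :: "(real \<times> real \<times> real \<times> real) set" where
  "Phi = {(tL, dL, tR, dR). tL > dL + 1 \<and> dL > 0 \<and> tR < -(dR + 1) \<and> dR > 0}"

(* Eigenvalues of A_L = [[tL,1],[-dL,0]]: roots of z^2 - tL z + dL = 0 *)
definition lamLu :: "real \<Rightarrow> real \<Rightarrow> real" where
  "lamLu tL dL = (tL + sqrt (tL^2 - 4*dL)) / 2"

definition lamLs :: "real \<Rightarrow> real \<Rightarrow> real" where
  "lamLs tL dL = (tL - sqrt (tL^2 - 4*dL)) / 2"

definition phi :: "real \<times> real \<times> real \<times> real \<Rightarrow> real" where
  "phi xi = (case xi of (tL, dL, tR, dR) \<Rightarrow>
      dR - (tR + dL + dR - (1 + tR) * lamLu tL dL) * lamLu tL dL)"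

definition Phi_BYG :: "(real \<times> real \<times> real \<times> real) set" where
  "Phi_BYG = {xi \<in> Phi. phi xi > 0}"

definition m_crit :: "real \<times> real \<times> real \<times> real \<Rightarrow> real" where
  "m_crit xi = (case xi of (tL, dL, tR, dR) \<Rightarrow>
      lamLs tL dL + 2 * tL / ((lamLu tL dL)^2 - 1))"

end

theory Submission
  imports Defs
begin

theorem lemma4p4:
  fixes tL dL tR dR :: real
  assumes "(tL, dL, tR, dR) \<in> Phi_BYG"
  shows "m_crit (tL, dL, tR, dR) > 2 * dR"
proof -
  have h1: "tL > dL + 1" and h2: "dL > 0" and h3: "tR < -(dR + 1)" and h4: "dR > 0"
    and hp: "dR - (tR + dL + dR - (1 + tR) * lamLu tL dL) * lamLu tL dL > 0"
    using assms by (auto simp: Phi_BYG_def Phi_def phi_def)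
  define r where "r = sqrt (tL^2 - 4*dL)"
  have disc: "tL^2 - 4*dL > 0"
  proof -
    have "tL^2 > (dL+1)^2" using h1 h2 by (simp add: power_strict_mono)
    moreover have "(dL+1)^2 \<ge> 4*dL" using zero_le_power2[of "dL-1"] by (simp add: power2_eq_square algebra_simps)
    ultimately show ?thesis by linarith
  qed
  have r2: "r^2 = tL^2 - 4*dL" using disc r_def by simp
  have r0: "r > 0" using disc r_def by simp
  define u where "u = lamLu tL dL"
  define s where "s = lamLs tL dL"
  have us: "u = (tL + r)/2" "s = (tL - r)/2" by (simp_all add: u_def s_def lamLu_def lamLs_def r_def)
  have sum: "u + s = tL" using us by simp
  have "u * s = (tL^2 - r^2)/4" unfolding us by (simp add: field_simps power2_eq_square)
  hence prod: "u * s = dL" using r2 by simp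
  have ugs: "u > s" using us r0 by simp
  have u0: "u > 0" using us r0 h1 h2 by simp
  have s0: "s > 0" using prod u0 h2 by (metis mult_pos_pos zero_less_mult_pos)
  have k: "(1-u)*(1-s) < 0" using sum prod h1 by (simp add: algebra_simps)
  have u1: "u > 1" and s1: "s < 1"
    using k ugs by (smt (verit) mult_nonneg_nonneg mult_nonpos_nonpos)+
  have hp2: "dR*(1-u) + tR*u*(u-1) + u^2*(1-s) > 0"
  proof -
    have "dR - (tR + dL + dR - (1 + tR) * u) * u > 0" using hp by (simp add: u_def)
    thus ?thesis unfolding prod[symmetric] by (simp add: algebra_simps power2_eq_square)
  qed
  have "tR*(u*(u-1)) \<le> -(dR+1)*(u*(u-1))"
    using h3 u1 by (intro mult_right_mono) auto
  hence key: "dR*(u^2-1) < u*(1-s*u)" using hp2 by (simp add: algebra_simps power2_eq_square)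
  have uu: "u^2 - 1 > 0" using u1 by (simp add: one_less_power)
  have "2*dR*(u^2-1) < s*(u^2-1) + 2*tL"
  proof -
    have "s*(u^2-1) + 2*tL - 2*u*(1-s*u) = s*(3*u^2+1)" using sum
      by (simp add: algebra_simps power2_eq_square)
    moreover have "s*(3*u^2+1) \<ge> 0" using s0 by simp
    ultimately have "2*u*(1-s*u) \<le> s*(u^2-1) + 2*tL" by linarith
    thus ?thesis using key by linarith
  qed
  hence "2*dR < s + 2*tL/(u^2-1)" using uu by (simp add: field_simps)
  thus ?thesis by (simp add: m_crit_def u_def s_def)
qed

end
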